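(* Consider a trajectory $\mathbf A(t)$, $t\ge0$, of the proto-cell ODE system described in the context. Let $\mathbf b$ be a moiety or a positive linear combination of moieties which is fed with some nutrient flux ($\mathbf b^T\mathbf f_{nu}>0$, i.e. $\mathscr S_{nu}\cap\mathrm{supp}(\mathbf b)\neq\varnothing$), and suppose that along the trajectory the concentrations of all species of $\mathscr S_{me}$ admit strictly positive lower bounds for all $t\ge0$. Then $\mathbf b^T\mathbf A(t)$ is bounded above for $t\ge0$. In particular, the cytoplasmic density $D(t)=\mathbf m^T\mathbf A(t)$ is bounded.
   Context: A chemical reaction network (CRN) has species $\mathscr S=\{A_0,\dots,A_{N-1}\}$ and $R$ reactions, with $N\times R$ stoichiometry matrix $S$. It is conservative: there is $\mathbf m\in\mathbb R^N$ with all $m_i>0$ and $\mathbf m^TS=0$. Let $p=\dim\ker(S^T)\ge 1$. The set $\{\mathbf b\in\mathbb R^N_{\ge 0}:\mathbf b^TS=0\}$ is a pointed convex cone; a set of moieties is a family of $p$ linearly independent generating vectors of this cone forming a basis of $\ker(S^T)$. The support $\mathrm{supp}(\mathbf b)$ of a nonnegative vector $\mathbf b$ is the set of species $A_i$ with $b_i\neq 0$. Proto-cell ODE: the concentration vector $\mathbf A(t)\in\mathbb R^N_{\ge0}$ (component $[A_i]$) satisfies $$\frac{d\mathbf A}{dt}=S\mathbf f(\mathbf A)+\mathbf f_{nu}(\mathbf A)-\mathbf f_{me}(\mathbf A)-\lambda(\mathbf A)\mathbf A,$$ where: $\mathbf f(\mathbf A)\in\mathbb R^R_{\ge0}$ is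 the vector of reaction rates; one species $A_{me}$ is the membrane precursor and $\mathscr S_{me}\subseteq\mathscr S$ is a set of species containing $A_{me}$; $\mathbf f_{me}(\mathbf A)$ has a single nonzero component, along $A_{me}$, equal to a scalar $f_{me}(\mathbf A)$ which depends only on the concentrations of species in $\mathscr S_{me}$, is continuous and monotonically increasing in these concentrations, satisfies $f_{me}(\mathbf 0)=0$, and is $>0$ iff all species of $\mathscr S_{me}$ have positive concentration; $C_{me}>0$ is a constant and $\lambda(\mathbf A)=f_{me}(\mathbf A)/C_{me}$ is the growth rate; $\mathscr S_{nu}\subseteq\mathscr S$ is the set of nutrients and $\mathbf f_{nu}$ has nonzero components only along species of $\mathscr S_{nu}$, being either (i) a constant vector with $f_{nu,i}>0$ for $A_i\in\mathscr S_{nu}$, or (ii) given by $f_{nu,i}=\mathcal D_i([A_{i,out}]-[A_i])/(1+[A_{i,out}]/K_{i,out})$ for $A_i\in\mathscr S_{nu}$, with positive constants $\mathcal D_i$, $[A_{i,out}]$, $K_{i,out}$. *)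

theory Defs
  imports "HOL-Analysis.Analysis"
begin

text \<open>Species are indexed by a finite type 'n, reactions by a finite type 'r.
  The stoichiometry matrix S is an N x R matrix: S :: real^'r^'n.
  For a row vector b, b^T S is written b v* S.\<close>

definition nonneg_vec :: "real^'n \<Rightarrow> bool" where
  "nonneg_vec x \<longleftrightarrow> (\<forall>i. 0 \<le> x $ i)"

definition supp :: "real^'n \<Rightarrow> 'n set" where
  "supp b = {i. b $ i \<noteq> 0}"

definition cons_cone :: "real^'r^'n \<Rightarrow> (real^'n) set" where
  "cons_cone S = {b. nonneg_vec b \<and> b v* S = 0}"

definition nonneg_comb :: "(real^'n) set \<Rightarrow> (real^'n) set" where
  "nonneg_comb B = {x. \<exists>c. (\<forall>v\<in>B. 0 \<le> c v) \<and> x = (\<Sum>v\<in>B. c v *\<^sub>R v)}"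

definition moiety_set :: "real^'r^'n \<Rightarrow> (real^'n) set \<Rightarrow> bool" where
  "moiety_set S B \<longleftrightarrow>
     finite B \<and> B \<subseteq> cons_cone S \<and> independent B \<and>
     span B = {x. x v* S = 0} \<and>
     nonneg_comb B = cons_cone S"

definition pos_comb_moieties :: "(real^'n) set \<Rightarrow> real^'n \<Rightarrow> bool" where
  "pos_comb_moieties B b \<longleftrightarrow>
     (\<exists>c. (\<forall>v\<in>B. 0 \<le> c v) \<and> (\<exists>v\<in>B. 0 < c v) \<and> b = (\<Sum>v\<in>B. c v *\<^sub>R v))"

definition membrane_rate :: "'n set \<Rightarrow> (real^'n \<Rightarrow> real) \<Rightarrow> bool" where
  "membrane_rate Sme fme \<longleftrightarrow>
     (\<forall>x y. (\<forall>i\<in>Sme. x $ i = y $ i) \<longrightarrow> fme x = fme y) \<and>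
     continuous_on {x. nonneg_vec x} fme \<and>
     (\<forall>x y. nonneg_vec x \<and> nonneg_vec y \<and> (\<forall>i\<in>Sme. x $ i \<le> y $ i) \<longrightarrow> fme x \<le> fme y) \<and>
     fme 0 = 0 \<and>
     (\<forall>x. nonneg_vec x \<longrightarrow> (0 < fme x \<longleftrightarrow> (\<forall>i\<in>Sme. 0 < x $ i)))"

definition fme_vec :: "'n \<Rightarrow> (real^'n \<Rightarrow> real) \<Rightarrow> real^'n \<Rightarrow> real^'n" where
  "fme_vec me fme x = (\<chi> i. if i = me then fme x else 0)"

definition nutrient_flux :: "'n set \<Rightarrow> (real^'n \<Rightarrow> real^'n) \<Rightarrow> bool" where
  "nutrient_flux Snu fnu \<longleftrightarrow>
     (\<exists>c. (\<forall>x. fnu x = c) \<and> (\<forall>i\<in>Snu. 0 < c $ i) \<and> (\<forall>i. i \<notin> Snu \<longrightarrow> c $ i = 0)) \<or>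
     (\<exists>Dc Aout K. (\<forall>i\<in>Snu. 0 < Dc i \<and> 0 < Aout i \<and> 0 < K i) \<and>
        (\<forall>x. fnu x = (\<chi> i. if i \<in> Snu then Dc i * (Aout i - x $ i) / (1 + Aout i / K i) else 0)))"

end

theory Submission imports Defs begin

lemma compare:
  fixes y d :: "real \<Rightarrow> real"
  assumes deriv: "\<forall>t\<ge>0. (y has_derivative (\<lambda>h. h * d t)) (at t within {0..})"
    and nonneg: "\<forall>t\<ge>0. 0 \<le> y t"
    and dbound: "\<forall>t\<ge>0. d t \<le> C - l0 * y t" and l0: "l0 > 0"
  shows "\<forall>t\<ge>0. y t \<le> max (y 0) (C/l0)"
proof (intro allI impI, rule ccontr)
  fix t1 :: real assume t1: "0 \<le> t1" and gt: "\<not> y t1 \<le> max (y 0) (C/l0)"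
  define K where "K = max (y 0) (C/l0)"
  define T where "T = {0..t1} \<inter> y -` {..K}"
  have cont: "continuous_on {0..t1} y"
    by (rule has_derivative_continuous_on[where f'="\<lambda>t h. h * d t"])
       (use deriv in \<open>auto intro: has_derivative_subset\<close>)
  have closedT: "closed T" unfolding T_def
    by (rule continuous_closed_preimage[OF cont]) auto
  have "0 \<in> T" using t1 by (auto simp: T_def K_def)
  have bdd: "bdd_above T" unfolding T_def by auto
  define s0 where "s0 = Sup T"
  have s0T: "s0 \<in> T" unfolding s0_def
    using closedT bdd \<open>0 \<in> T\<close> closed_contains_Sup by blast
  have ys0: "y s0 \<le> K" "0 \<le> s0" "s0 \<le> t1" using s0T by (auto simp: T_def)
  have "y t1 > K" using gt K_def by auto
  hence lt: "s0 < t1" using ys0 by (cases "s0 = t1") auto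
  have above: "y x > K" if "s0 < x" "x \<le> t1" for x
  proof (rule ccontr)
    assume "\<not> K < y x"
    hence "x \<in> T" using that ys0 by (auto simp: T_def)
    hence "x \<le> s0" unfolding s0_def using bdd by (simp add: cSup_upper)
    thus False using that by simp
  qed
  obtain \<xi> where xi: "\<xi> \<in> {s0<..<t1}" "y t1 - y s0 = (t1 - s0) * d \<xi>"
  proof -
    have "(y has_derivative (\<lambda>h. h * d x)) (at x within {s0..t1})" if "s0 \<le> x" "x \<le> t1" for x
      using deriv that ys0(2) has_derivative_subset[of y _ x "{0..}" "{s0..t1}"] by auto
    then show ?thesis using mvt_simple[OF lt, of y "\<lambda>t h. h * d t"] that by (auto simp: mult.commute)
  qed
  have "y \<xi> > K" using above xi by auto
  moreover have "d \<xi> \<le> C - l0 * y \<xi>" using dbound xi ys0 by auto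
  moreover have "C \<le> l0 * K"
  proof -
    have "C/l0 \<le> K" by (simp add: K_def)
    thus ?thesis using l0 by (simp add: pos_divide_le_eq mult.commute)
  qed
  ultimately have "d \<xi> < 0" using l0 by (smt (verit) mult_strict_left_mono)
  moreover have "y t1 - y s0 > 0" using \<open>y t1 > K\<close> ys0 by simp
  ultimately show False using xi lt by (smt (verit) mult_pos_neg)
qed
lemma inner_nonneg_vec:
  fixes w x :: "real^'n::finite"
  assumes "nonneg_vec w" "nonneg_vec x" shows "0 \<le> w \<bullet> x"
  using assms unfolding inner_vec_def nonneg_vec_def by (auto intro!: sum_nonneg)

lemma inner_fme_vec:
  fixes w :: "real^'n::finite"
  shows "w \<bullet> fme_vec me fme x = w $ me * fme x"
  unfolding inner_vec_def fme_vec_def by (simp add: if_distrib sum.delta cong: if_cong)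

lemma fnu_bound:
  fixes w :: "real^'n::finite"
  assumes w: "nonneg_vec w" and fnu_ok: "nutrient_flux Snu fnu"
  shows "\<exists>C. \<forall>x. nonneg_vec x \<longrightarrow> w \<bullet> fnu x \<le> C"
  using fnu_ok unfolding nutrient_flux_def
proof (elim disjE exE conjE)
  fix c assume "\<forall>x. fnu x = c" thus ?thesis by auto
next
  fix Dc Aout K
  assume pos: "\<forall>i\<in>Snu. 0 < Dc i \<and> 0 < Aout i \<and> 0 < K i"
    and eq: "\<forall>x. fnu x = (\<chi> i. if i \<in> Snu then Dc i * (Aout i - x $ i) / (1 + Aout i / K i) else 0)"
  show ?thesis
  proof (intro exI allI impI)
    fix x :: "real^'n" assume x: "nonneg_vec x"
    have "w \<bullet> fnu x = (\<Sum>i\<in>UNIV. w $ i * (if i \<in> Snu then Dc i * (Aout i - x $ i) / (1 + Aout i / K i) else 0))"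
      by (simp add: eq inner_vec_def)
    also have "\<dots> \<le> (\<Sum>i\<in>UNIV. w $ i * (if i \<in> Snu then Dc i * Aout i / (1 + Aout i / K i) else 0))"
    proof (rule sum_mono)
      fix i :: 'n
      show "w $ i * (if i \<in> Snu then Dc i * (Aout i - x $ i) / (1 + Aout i / K i) else 0)
         \<le> w $ i * (if i \<in> Snu then Dc i * Aout i / (1 + Aout i / K i) else 0)"
      proof (cases "i \<in> Snu")
        case True
        with pos have p: "0 < Dc i" "0 < Aout i" "0 < K i" by auto
        have den: "0 < 1 + Aout i / K i" using p by (simp add: add_pos_pos)
        have "Dc i * (Aout i - x $ i) \<le> Dc i * Aout i"
          using p x by (simp add: nonneg_vec_def algebra_simps)
        hence "Dc i * (Aout i - x $ i) / (1 + Aout i / K i) \<le> Dc i * Aout i / (1 + Aout i / K i)"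
          using den by (simp add: divide_right_mono)
        hence "w $ i * (Dc i * (Aout i - x $ i) / (1 + Aout i / K i)) \<le> w $ i * (Dc i * Aout i / (1 + Aout i / K i))"
          using w by (intro mult_left_mono) (auto simp: nonneg_vec_def)
        thus ?thesis using True by simp
      qed simp
    qed
    finally show "w \<bullet> fnu x \<le> (\<Sum>i\<in>UNIV. w $ i * (if i \<in> Snu then Dc i * Aout i / (1 + Aout i / K i) else 0))" .
  qed
qed

lemma wbound:
  fixes S :: "real^'r::finite^'n::finite" and w :: "real^'n"
    and A :: "real \<Rightarrow> real^'n"
  assumes wnn: "nonneg_vec w" and wS: "w v* S = 0"
    and fnuC: "\<forall>x. nonneg_vec x \<longrightarrow> w \<bullet> fnu x \<le> C"
    and l0: "l0 > 0" and lam: "\<forall>t\<ge>0. l0 \<le> fme (A t) / Cme"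
    and fmenn: "\<forall>t\<ge>0. 0 \<le> fme (A t)"
    and A_nonneg: "\<forall>t\<ge>0. nonneg_vec (A t)"
    and ode: "\<forall>t\<ge>0. (A has_vector_derivative
               (S *v f (A t) + fnu (A t) - fme_vec me fme (A t) - (fme (A t) / Cme) *\<^sub>R A t))
               (at t within {0..})"
  shows "\<exists>M. \<forall>t\<ge>0. w \<bullet> A t \<le> M"
proof -
  define D where "D t = S *v f (A t) + fnu (A t) - fme_vec me fme (A t) - (fme (A t) / Cme) *\<^sub>R A t" for t
  have der: "\<forall>t\<ge>0. ((\<lambda>t. w \<bullet> A t) has_derivative (\<lambda>h. h * (w \<bullet> D t))) (at t within {0..})"
  proof (intro allI impI)
    fix t :: real assume "0 \<le> t"
    hence "(A has_derivative (\<lambda>h. h *\<^sub>R D t)) (at t within {0..})"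
      using ode by (simp add: D_def has_vector_derivative_def)
    from has_derivative_inner_right[OF this, of w]
    show "((\<lambda>t. w \<bullet> A t) has_derivative (\<lambda>h. h * (w \<bullet> D t))) (at t within {0..})"
      by simp
  qed
  have nn: "\<forall>t\<ge>0. 0 \<le> w \<bullet> A t" using A_nonneg wnn inner_nonneg_vec by blast
  have db: "\<forall>t\<ge>0. w \<bullet> D t \<le> C - l0 * (w \<bullet> A t)"
  proof (intro allI impI)
    fix t :: real assume t: "0 \<le> t"
    have e: "w \<bullet> D t = (w v* S) \<bullet> f (A t) + w \<bullet> fnu (A t) - w $ me * fme (A t) - (fme (A t) / Cme) * (w \<bullet> A t)"
      by (simp add: D_def inner_diff_right inner_add_right dot_lmul_matrix inner_fme_vec)
    have "0 \<le> w $ me * fme (A t)" using wnn fmenn t by (simp add: nonneg_vec_def)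
    moreover have "l0 * (w \<bullet> A t) \<le> (fme (A t) / Cme) * (w \<bullet> A t)"
      using lam t nn by (intro mult_right_mono) auto
    moreover have "w \<bullet> fnu (A t) \<le> C" using fnuC A_nonneg t by blast
    ultimately show "w \<bullet> D t \<le> C - l0 * (w \<bullet> A t)" using e wS by simp
  qed
  show ?thesis using compare[OF der nn db l0] by blast
qed

theorem mainTheorem3:
  fixes S :: "real^'r::finite^'n::finite"
    and m :: "real^'n"
    and B :: "(real^'n) set"
    and b :: "real^'n"
    and f :: "real^'n \<Rightarrow> real^'r"
    and me :: 'n
    and Sme Snu :: "'n set"
    and fme :: "real^'n \<Rightarrow> real"
    and Cme :: real
    and fnu :: "real^'n \<Rightarrow> real^'n"
    and A :: "real \<Rightarrow> real^'n"
  assumes m_pos: "\<forall>i. 0 < m $ i"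
    and m_cons: "m v* S = 0"
    and moieties: "moiety_set S B"
    and b_comb: "pos_comb_moieties B b"
    and f_nonneg: "\<forall>x. nonneg_vec (f x)"
    and me_in: "me \<in> Sme"
    and fme_ok: "membrane_rate Sme fme"
    and Cme_pos: "0 < Cme"
    and fnu_ok: "nutrient_flux Snu fnu"
    and fed: "Snu \<inter> supp b \<noteq> {}"
    and A_nonneg: "\<forall>t\<ge>0. nonneg_vec (A t)"
    and ode: "\<forall>t\<ge>0. (A has_vector_derivative
               (S *v f (A t) + fnu (A t) - fme_vec me fme (A t) - (fme (A t) / Cme) *\<^sub>R A t))
               (at t within {0..})"
    and lower: "\<forall>i\<in>Sme. \<exists>\<epsilon>>0. \<forall>t\<ge>0. \<epsilon> \<le> A t $ i"
  shows "(\<exists>M. \<forall>t\<ge>0. b \<bullet> A t \<le> M) \<and> (\<exists>M. \<forall>t\<ge>0. \<bar>m \<bullet> A t\<bar> \<le> M)"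
proof -
  have bnn: "nonneg_vec b" and bS: "b v* S = 0"
  proof -
    obtain c where c: "\<forall>v\<in>B. 0 \<le> c v" "b = (\<Sum>v\<in>B. c v *\<^sub>R v)"
      using b_comb unfolding pos_comb_moieties_def by blast
    have fin: "finite B" and sub: "B \<subseteq> cons_cone S" and sp: "span B = {x. x v* S = 0}"
      using moieties unfolding moiety_set_def by auto
    have "b \<in> span B" unfolding c(2) by (intro span_sum span_scale span_base)
    thus "b v* S = 0" using sp by auto
    show "nonneg_vec b" unfolding nonneg_vec_def c(2)
    proof
      fix i
      have "(\<Sum>v\<in>B. c v *\<^sub>R v) $ i = (\<Sum>v\<in>B. c v * v $ i)" by (simp add: sum_component)
      also have "\<dots> \<ge> 0" using c(1) sub
        by (intro sum_nonneg) (auto simp: cons_cone_def nonneg_vec_def)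
      finally show "0 \<le> (\<Sum>v\<in>B. c v *\<^sub>R v) $ i" by simp
    qed
  qed
  have mnn: "nonneg_vec m" using m_pos by (simp add: nonneg_vec_def less_imp_le)
  obtain eps where eps: "\<forall>i\<in>Sme. 0 < eps i \<and> (\<forall>t\<ge>0. eps i \<le> A t $ i)"
    using lower by metis
  define x0 :: "real^'n" where "x0 = (\<chi> i. if i \<in> Sme then eps i else 0)"
  have x0nn: "nonneg_vec x0" using eps by (auto simp: x0_def nonneg_vec_def less_imp_le)
  have fx0: "0 < fme x0" using fme_ok x0nn eps unfolding membrane_rate_def by (auto simp: x0_def)
  have mono: "\<forall>t\<ge>0. fme x0 \<le> fme (A t)"
    using fme_ok x0nn A_nonneg eps unfolding membrane_rate_def by (auto simp: x0_def)
  define l0 where "l0 = fme x0 / Cme"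
  have l0: "l0 > 0" using fx0 Cme_pos by (simp add: l0_def)
  have lam: "\<forall>t\<ge>0. l0 \<le> fme (A t) / Cme" using mono Cme_pos by (simp add: l0_def divide_right_mono)
  have fmenn: "\<forall>t\<ge>0. 0 \<le> fme (A t)" using mono fx0 by force
  obtain Cb where Cb: "\<forall>x. nonneg_vec x \<longrightarrow> b \<bullet> fnu x \<le> Cb" using fnu_bound[OF bnn fnu_ok] by blast
  obtain Cm where Cm: "\<forall>x. nonneg_vec x \<longrightarrow> m \<bullet> fnu x \<le> Cm" using fnu_bound[OF mnn fnu_ok] by blast
  have 1: "\<exists>M. \<forall>t\<ge>0. b \<bullet> A t \<le> M"
    by (rule wbound[OF bnn bS Cb l0 lam fmenn A_nonneg ode])
  obtain M where M: "\<forall>t\<ge>0. m \<bullet> A t \<le> M"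
    using wbound[OF mnn m_cons Cm l0 lam fmenn A_nonneg ode] by blast
  have "\<forall>t\<ge>0. \<bar>m \<bullet> A t\<bar> \<le> M"
    using M A_nonneg mnn inner_nonneg_vec by (metis abs_of_nonneg)
  with 1 show ?thesis by blast
qed

end
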